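(* Let $G$ be a finite abelian group and let $f$ be an automorphism of $\mathcal{P}_{0}(G)$ with pullback $g$. Then for every nonzero $a\in G$ and every $n\in\mathbb{N}$ we have $\operatorname{ord}(a)=\operatorname{ord}(g(a))$ and $g(na)=ng(a)$.
   Context: For an additively written finite abelian group $G$, $\mathcal{P}_{0}(G)$ is the monoid of all subsets of $G$ containing $0$, with setwise addition and identity $\{0\}$. Every automorphism $f$ of $\mathcal{P}_0(G)$ maps $2$-element sets to $2$-element sets; the pullback of $f$ is the bijection $g:G\to G$ defined by $g(0)=0$ and, for nonzero $a\in G$, by $f(\{0,a\})=\{0,g(a)\}$. $\mathbb{N}$ is the set of positive integers. *)

theory Defs
  imports Main
begin

text \<open>Finite abelian groups are modelled as types of class ab_group_add and finite.\<close>

primrec natmul :: "nat \<Rightarrow> 'a::monoid_add \<Rightarrow> 'a" where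
  "natmul 0 a = 0"
| "natmul (Suc n) a = a + natmul n a"

definition add_ord :: "'a::monoid_add \<Rightarrow> nat" where
  "add_ord a = (LEAST n. 0 < n \<and> natmul n a = 0)"

definition sumset :: "'a::plus set \<Rightarrow> 'a set \<Rightarrow> 'a set" where
  "sumset A B = {a + b | a b. a \<in> A \<and> b \<in> B}"

definition P0 :: "'a::zero set set" where
  "P0 = {A. (0::'a) \<in> A}"

definition is_aut_P0 :: "('a::{plus,zero} set \<Rightarrow> 'a set) \<Rightarrow> bool" where
  "is_aut_P0 f \<longleftrightarrow> bij_betw f P0 P0
     \<and> (\<forall>A\<in>P0. \<forall>B\<in>P0. f (sumset A B) = sumset (f A) (f B))
     \<and> f {0} = {0}"

definition pullback :: "('a::zero set \<Rightarrow> 'a set) \<Rightarrow> 'a \<Rightarrow> 'a" where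
  "pullback f a = (if a = 0 then 0 else (THE b. b \<noteq> 0 \<and> f {0, a} = {0, b}))"

end

theory Submission
  imports Defs
begin

lemma natmul_add: "natmul (i+j) x = natmul i x + natmul j (x::'a::monoid_add)"
  by (induct i) (simp_all add: add.assoc)

lemma natmul_mult_zero: "natmul n (x::'a::monoid_add) = 0 \<Longrightarrow> natmul (q*n) x = 0"
  by (induct q) (simp_all add: natmul_add)

lemma ord_exists: "\<exists>n>0. natmul n (x::'a::{ab_group_add,finite}) = 0"
proof -
  have "\<not> inj (\<lambda>n::nat. natmul n x)"
  proof
    assume "inj (\<lambda>n::nat. natmul n x)"
    moreover have "finite (range (\<lambda>n::nat. natmul n x))" by simp
    ultimately have "finite (UNIV::nat set)" using finite_imageD by blast
    then show False by simp
  qed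
  then obtain i j where ij: "i \<noteq> j" "natmul i x = natmul j x" unfolding inj_def by blast
  have "\<exists>i j. i < j \<and> natmul i x = natmul j x"
    using ij by (metis linorder_neqE_nat)
  then obtain i j where ij2: "i < j" "natmul i x = natmul j x" by blast
  have "natmul (j - i) x + natmul i x = 0 + natmul i x"
    using ij2 natmul_add[of "j-i" i x] by simp
  then have "natmul (j - i) x = 0" by (rule add_right_imp_eq)
  then show ?thesis using ij2 by (intro exI[of _ "j-i"]) simp
qed

lemma ord_pos: "0 < add_ord (x::'a::{ab_group_add,finite})"
  unfolding add_ord_def using LeastI_ex[OF ord_exists[of x]] by blast

lemma ord_zero: "natmul (add_ord x) (x::'a::{ab_group_add,finite}) = 0"
  unfolding add_ord_def using LeastI_ex[OF ord_exists[of x]] by blast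

lemma ord_min: "0 < m \<Longrightarrow> m < add_ord (x::'a::{ab_group_add,finite}) \<Longrightarrow> natmul m x \<noteq> 0"
  unfolding add_ord_def using not_less_Least by blast

lemma natmul_inj:
  fixes x :: "'a::{ab_group_add,finite}"
  assumes "i < add_ord x" "j < add_ord x" "natmul i x = natmul j x"
  shows "i = j"
proof (rule ccontr)
  assume "i \<noteq> j"
  then consider "i < j" | "j < i" by linarith
  then show False
  proof cases
    case 1
    have "natmul (j - i) x + natmul i x = 0 + natmul i x"
      using assms 1 natmul_add[of "j-i" i x] by simp
    then have "natmul (j - i) x = 0" by (rule add_right_imp_eq)
    then show False using ord_min[of "j-i" x] 1 assms by simp
  next
    case 2
    have "natmul (i - j) x + natmul j x = 0 + natmul j x"
      using assms 2 natmul_add[of "i-j" j x] by simp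
    then have "natmul (i - j) x = 0" by (rule add_right_imp_eq)
    then show False using ord_min[of "i-j" x] 2 assms by simp
  qed
qed

lemma natmul_mod: "natmul k (x::'a::{ab_group_add,finite}) = natmul (k mod add_ord x) x"
proof -
  have "natmul k x = natmul ((k div add_ord x) * add_ord x + k mod add_ord x) x" by simp
  also have "\<dots> = natmul (k mod add_ord x) x"
    unfolding natmul_add natmul_mult_zero[OF ord_zero] by simp
  finally show ?thesis .
qed

lemma sumset_iff: "y \<in> sumset A B \<longleftrightarrow> (\<exists>a\<in>A. \<exists>b\<in>B. y = a + b)"
  unfolding sumset_def by blast

lemma zero_sumset: "(0::'a::monoid_add) \<in> A \<Longrightarrow> 0 \<in> B \<Longrightarrow> 0 \<in> sumset A B"
  unfolding sumset_iff by (rule bexI[of _ 0], rule bexI[of _ 0]) auto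

primrec pw :: "nat \<Rightarrow> 'a::{plus,zero} set \<Rightarrow> 'a set" where
  "pw 0 A = {0}"
| "pw (Suc k) A = sumset A (pw k A)"

lemma pw_pair: "pw k {0, x} = (\<lambda>j. natmul j (x::'a::monoid_add)) ` {..k}"
proof (induct k)
  case 0 then show ?case by simp
next
  case (Suc k)
  have "pw (Suc k) {0,x} = sumset {0,x} ((\<lambda>j. natmul j x) ` {..k})" using Suc by simp
  also have "\<dots> = (\<lambda>j. natmul j x) ` {..Suc k}"
  proof (rule set_eqI, rule iffI)
    fix y assume "y \<in> sumset {0,x} ((\<lambda>j. natmul j x) ` {..k})"
    then obtain u j where u: "u \<in> {0,x}" "j \<le> k" "y = u + natmul j x" unfolding sumset_iff by blast
    show "y \<in> (\<lambda>j. natmul j x) ` {..Suc k}"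
    proof (cases "u = 0")
      case True then show ?thesis using u by (intro image_eqI[of _ _ j]) auto
    next
      case False then show ?thesis using u by (intro image_eqI[of _ _ "Suc j"]) auto
    qed
  next
    fix y assume "y \<in> (\<lambda>j. natmul j x) ` {..Suc k}"
    then obtain j where j: "j \<le> Suc k" "y = natmul j x" by auto
    show "y \<in> sumset {0,x} ((\<lambda>j. natmul j x) ` {..k})"
    proof (cases j)
      case 0 then show ?thesis using j unfolding sumset_iff
        by (intro bexI[of _ 0] bexI[of _ 0]) (auto intro: image_eqI[of _ _ 0])
    next
      case (Suc i) then show ?thesis using j unfolding sumset_iff
        by (intro bexI[of _ x] bexI[of _ "natmul i x"]) auto
    qed
  qed
  finally show ?case .
qed

lemma sumset_P0: "A \<in> P0 \<Longrightarrow> B \<in> P0 \<Longrightarrow> sumset A B \<in> (P0::'a::monoid_add set set)"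
  unfolding P0_def using zero_sumset by blast

lemma pw_P0: "A \<in> (P0::'a::monoid_add set set) \<Longrightarrow> pw k A \<in> P0"
  by (induct k) (auto simp: P0_def intro: zero_sumset)

lemma aut_pw: "is_aut_P0 (f::'a::monoid_add set \<Rightarrow> _) \<Longrightarrow> A \<in> P0 \<Longrightarrow> f (pw k A) = pw k (f A)"
  by (induct k) (auto simp: is_aut_P0_def pw_P0)

lemma sumset_mono0: "(0::'a::monoid_add) \<in> A \<Longrightarrow> B \<subseteq> sumset A B"
  unfolding subset_iff sumset_iff by (metis add.left_neutral)

lemma sumset_mono0': "(0::'a::monoid_add) \<in> B \<Longrightarrow> A \<subseteq> sumset A B"
  unfolding subset_iff sumset_iff by (metis add.right_neutral)

lemma sumset_mono: "A \<subseteq> A' \<Longrightarrow> B \<subseteq> B' \<Longrightarrow> sumset A B \<subseteq> sumset A' B'"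
  unfolding subset_iff sumset_iff by blast

lemma idem_count:
  fixes K :: "'a::monoid_add set"
  assumes "0 \<in> K" "sumset K K = K" "finite K"
  shows "card {X \<in> P0. sumset X K = K} = 2 ^ (card K - 1)"
proof -
  have eq: "{X \<in> P0. sumset X K = K} = insert 0 ` Pow (K - {0})"
  proof (rule set_eqI, rule iffI)
    fix X assume "X \<in> {X \<in> P0. sumset X K = K}"
    then have X: "0 \<in> X" "sumset X K = K" unfolding P0_def by auto
    then have "X \<subseteq> K" using sumset_mono0'[OF assms(1), of X] by simp
    then show "X \<in> insert 0 ` Pow (K - {0})" using X
      by (intro image_eqI[of _ _ "X - {0}"]) auto
  next
    fix X assume "X \<in> insert 0 ` Pow (K - {0})"
    then have X: "0 \<in> X" "X \<subseteq> K" using assms(1) by auto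
    have "sumset X K \<subseteq> K" using sumset_mono[OF X(2), of K K] assms(2) by simp
    moreover have "K \<subseteq> sumset X K" using sumset_mono0[OF X(1)] .
    ultimately show "X \<in> {X \<in> P0. sumset X K = K}" using X unfolding P0_def by auto
  qed
  have "inj_on (insert 0) (Pow (K - {0}))"
    unfolding inj_on_def by blast
  then have "card (insert 0 ` Pow (K - {0})) = card (Pow (K - {0}))" by (rule card_image)
  also have "\<dots> = 2 ^ card (K - {0})" using assms(3) by (simp add: card_Pow)
  also have "card (K - {0}) = card K - 1" using assms by simp
  finally show ?thesis using eq by simp
qed

lemma aut_card_idem:
  fixes f :: "'a::{monoid_add,finite} set \<Rightarrow> 'a set"
  assumes f: "is_aut_P0 f" and K: "K \<in> P0" "sumset K K = K"
  shows "card (f K) = card K"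
proof -
  have bij: "bij_betw f P0 P0" and hom: "\<And>A B. A \<in> P0 \<Longrightarrow> B \<in> P0 \<Longrightarrow> f (sumset A B) = sumset (f A) (f B)"
    using f unfolding is_aut_P0_def by auto
  have inj: "inj_on f P0" and surj: "f ` P0 = P0" using bij unfolding bij_betw_def by auto
  have fK: "f K \<in> P0" using K surj by auto
  have fKK: "sumset (f K) (f K) = f K" using hom[OF K(1) K(1)] K by simp
  have img: "f ` {X \<in> P0. sumset X K = K} = {Y \<in> P0. sumset Y (f K) = f K}"
  proof (rule set_eqI, rule iffI)
    fix Y assume "Y \<in> f ` {X \<in> P0. sumset X K = K}"
    then obtain X where X: "X \<in> P0" "sumset X K = K" "Y = f X" by auto
    then show "Y \<in> {Y \<in> P0. sumset Y (f K) = f K}" using hom[OF X(1) K(1)] surj by auto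
  next
    fix Y assume Y: "Y \<in> {Y \<in> P0. sumset Y (f K) = f K}"
    then obtain X where X: "X \<in> P0" "Y = f X" using surj by (metis (no_types, lifting) image_iff mem_Collect_eq)
    have "f (sumset X K) = f K" using hom[OF X(1) K(1)] Y X by simp
    then have "sumset X K = K" using inj sumset_P0[OF X(1) K(1)] K(1) unfolding inj_on_def by blast
    then show "Y \<in> f ` {X \<in> P0. sumset X K = K}" using X by auto
  qed
  have "card {Y \<in> P0. sumset Y (f K) = f K} = card {X \<in> P0. sumset X K = K}"
    unfolding img[symmetric] by (rule card_image, rule inj_on_subset[OF inj]) auto
  then have "(2::nat) ^ (card (f K) - 1) = 2 ^ (card K - 1)"
    using idem_count[of K] idem_count[of "f K"] K fK fKK unfolding P0_def by simp
  then have "card (f K) - 1 = card K - 1" by simp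
  moreover have "card (f K) \<ge> 1" "card K \<ge> 1" using K fK unfolding P0_def
    by (auto simp: Suc_le_eq card_gt_0_iff)
  ultimately show ?thesis by simp
qed

lemma pw_step_iff:
  fixes x :: "'a::{ab_group_add,finite}"
  shows "pw k {0,x} = pw (Suc k) {0,x} \<longleftrightarrow> add_ord x \<le> Suc k"
proof
  assume eq: "pw k {0,x} = pw (Suc k) {0,x}"
  show "add_ord x \<le> Suc k"
  proof (rule ccontr)
    assume "\<not> add_ord x \<le> Suc k"
    have "natmul (Suc k) x \<in> pw (Suc k) {0,x}" unfolding pw_pair by (rule imageI) simp
    then have "natmul (Suc k) x \<in> (\<lambda>j. natmul j x) ` {..k}" using eq unfolding pw_pair by simp
    then obtain j where "j \<le> k" "natmul (Suc k) x = natmul j x" by (auto simp del: natmul.simps)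
    then show False using natmul_inj[of "Suc k" x j] \<open>\<not> add_ord x \<le> Suc k\<close> by simp
  qed
next
  assume le: "add_ord x \<le> Suc k"
  have "natmul (Suc k) x = natmul (Suc k mod add_ord x) x" by (rule natmul_mod)
  moreover have "Suc k mod add_ord x \<le> k" using le ord_pos[of x]
    by (metis less_Suc_eq_le mod_less_divisor order_less_le_trans)
  ultimately have "natmul (Suc k) x \<in> pw k {0,x}" unfolding pw_pair by auto
  then have "insert (natmul (Suc k) x) (pw k {0,x}) = pw k {0,x}" by blast
  then show "pw k {0,x} = pw (Suc k) {0,x}" unfolding pw_pair atMost_Suc image_insert
    by simp
qed

lemma card_pw_pair:
  fixes x :: "'a::{ab_group_add,finite}"
  assumes "k < add_ord x"
  shows "card (pw k {0,x}) = Suc k"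
proof -
  have "inj_on (\<lambda>j. natmul j x) {..k}"
    unfolding inj_on_def using natmul_inj[of _ x] assms by (meson atMost_iff le_less_trans)
  then show ?thesis unfolding pw_pair by (simp add: card_image)
qed

lemma pw_pair_idem:
  fixes x :: "'a::{ab_group_add,finite}"
  shows "sumset (pw (add_ord x - 1) {0,x}) (pw (add_ord x - 1) {0,x}) = pw (add_ord x - 1) {0,x}"
proof
  let ?H = "pw (add_ord x - 1) {0,x}"
  have H: "?H = (\<lambda>j. natmul j x) ` {..<add_ord x}" unfolding pw_pair using ord_pos[of x]
    by (metis Suc_pred' lessThan_Suc_atMost)
  show "sumset ?H ?H \<subseteq> ?H"
  proof
    fix y assume "y \<in> sumset ?H ?H"
    then obtain i j where ij: "i < add_ord x" "j < add_ord x" "y = natmul i x + natmul j x"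
      unfolding sumset_iff H by blast
    then have "y = natmul ((i + j) mod add_ord x) x" using natmul_add natmul_mod by metis
    then show "y \<in> ?H" unfolding H using ord_pos[of x] by auto
  qed
  show "?H \<subseteq> sumset ?H ?H"
    by (rule sumset_mono0) (use pw_P0[of "{0,x}" "add_ord x - 1"] in \<open>simp add: P0_def\<close>)
qed

lemma two_elem:
  fixes f :: "'a::{ab_group_add,finite} set \<Rightarrow> 'a set"
  assumes f: "is_aut_P0 f" and a: "a \<noteq> 0"
  shows "\<exists>b. b \<noteq> 0 \<and> f {0,a} = {0,b}"
proof -
  have bij: "bij_betw f P0 P0" and f0: "f {0} = {0}"
    using f unfolding is_aut_P0_def by auto
  have inj: "inj_on f P0" and surj: "f ` P0 = P0" using bij unfolding bij_betw_def by auto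
  define N where "N = add_ord a"
  define A where "A = {0::'a, a}"
  define B where "B = f A"
  have AP: "A \<in> P0" unfolding A_def P0_def by simp
  have BP: "B \<in> P0" unfolding B_def using AP surj by auto
  have "N \<noteq> 1" using ord_zero[of a] a unfolding N_def by auto
  then have N2: "2 \<le> N" using ord_pos[of a] unfolding N_def by linarith
  have fpw: "\<And>k. f (pw k A) = pw k B" unfolding B_def using aut_pw[OF f AP] .
  let ?H = "pw (N - 1) A"
  have "card (f ?H) = card ?H"
    by (rule aut_card_idem[OF f pw_P0[OF AP]]) (unfold A_def N_def, rule pw_pair_idem)
  moreover have "card ?H = N" unfolding A_def N_def using card_pw_pair[of "add_ord a - 1" a] N2 N_def by simp
  ultimately have cardH: "card (pw (N - 1) B) = N" using fpw by simp
  have chain: "1 \<le> k \<Longrightarrow> k \<le> N - 1 \<Longrightarrow> card B + k \<le> card (pw k B) + 1" for k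
  proof (induct k)
    case 0 then show ?case by simp
  next
    case (Suc k)
    show ?case
    proof (cases "k = 0")
      case True
      have "pw 1 B = B" unfolding One_nat_def pw.simps by (auto simp: sumset_iff)
      then show ?thesis using True by simp
    next
      case False
      have IH: "card B + k \<le> card (pw k B) + 1" using Suc False by simp
      have sub: "pw k B \<subseteq> pw (Suc k) B" using BP unfolding P0_def by (simp add: sumset_mono0)
      have "pw k A \<noteq> pw (Suc k) A" unfolding A_def using pw_step_iff[of k a] Suc unfolding N_def by simp
      then have "f (pw k A) \<noteq> f (pw (Suc k) A)" using inj pw_P0[OF AP] unfolding inj_on_def by blast
      then have "pw k B \<noteq> pw (Suc k) B" by (metis fpw)
      then have "pw k B \<subset> pw (Suc k) B" using sub by (intro psubsetI)
      then have "card (pw k B) < card (pw (Suc k) B)" by (simp add: psubset_card_mono)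
      then show ?thesis using IH by simp
    qed
  qed
  have "card B + (N - 1) \<le> card (pw (N - 1) B) + 1" using chain[of "N - 1"] N2 by linarith
  then have "card B \<le> 2" using N2 cardH by linarith
  have "B \<noteq> {0}"
  proof
    assume "B = {0}"
    then have "f A = f {0}" using f0 B_def by simp
    moreover have "{0} \<in> P0" unfolding P0_def by simp
    ultimately have "A = {0}" using inj AP unfolding inj_on_def by blast
    then show False using a A_def by auto
  qed
  then obtain b where b: "b \<in> B" "b \<noteq> 0" using BP unfolding P0_def by blast
  have "{0, b} \<subseteq> B" using b BP unfolding P0_def by auto
  moreover have "card {0, b} = 2" using b by simp
  ultimately have "B = {0, b}" using \<open>card B \<le> 2\<close>
    by (metis card_subset_eq finite le_antisym card_mono)
  then show ?thesis using b B_def A_def by blast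
qed

lemma pullback_eq:
  fixes f :: "'a::{ab_group_add,finite} set \<Rightarrow> 'a set"
  assumes f: "is_aut_P0 f" and a: "a \<noteq> 0"
  shows "pullback f a \<noteq> 0 \<and> f {0,a} = {0, pullback f a}"
proof -
  obtain b where b: "b \<noteq> 0" "f {0,a} = {0,b}" using two_elem[OF f a] by blast
  have "(THE b'. b' \<noteq> 0 \<and> f {0, a} = {0, b'}) = b"
    by (rule the_equality) (use b in \<open>auto simp: doubleton_eq_iff\<close>)
  then show ?thesis using a b unfolding pullback_def by simp
qed

lemma sumset_interval:
  fixes a :: "'a::monoid_add"
  shows "sumset {0, natmul (Suc k) a} (pw k {0,a}) = pw (Suc (2*k)) {0,a}"
proof (unfold pw_pair, rule set_eqI, rule iffI)
  fix y assume "y \<in> sumset {0, natmul (Suc k) a} ((\<lambda>j. natmul j a) ` {..k})"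
  then obtain u j where u: "u \<in> {0, natmul (Suc k) a}" "j \<le> k" "y = u + natmul j a"
    unfolding sumset_iff by blast
  show "y \<in> (\<lambda>j. natmul j a) ` {..Suc (2*k)}"
  proof (cases "u = 0")
    case True then show ?thesis using u by (intro image_eqI[of _ _ j]) auto
  next
    case False
    then have uc: "u = natmul (Suc k) a" using u by blast
    have "y = natmul (Suc k + j) a" using u(3) uc natmul_add[of "Suc k" j a] by metis
    then show ?thesis using u by (intro image_eqI[of _ _ "Suc k + j"]) auto
  qed
next
  fix y assume "y \<in> (\<lambda>j. natmul j a) ` {..Suc (2*k)}"
  then obtain i where i: "i \<le> Suc (2*k)" "y = natmul i a" by blast
  show "y \<in> sumset {0, natmul (Suc k) a} ((\<lambda>j. natmul j a) ` {..k})"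
  proof (cases "i \<le> k")
    case True then show ?thesis unfolding sumset_iff using i
      by (intro bexI[of _ 0] bexI[of _ "natmul i a"]) auto
  next
    case False
    then have "y = natmul (Suc k) a + natmul (i - Suc k) a" using i natmul_add[of "Suc k" "i - Suc k" a]
      by simp
    then show ?thesis unfolding sumset_iff using i False
      by (intro bexI[of _ "natmul (Suc k) a"] bexI[of _ "natmul (i - Suc k) a"]) auto
  qed
qed

theorem lemma2p5:
  fixes f :: "'a::{ab_group_add, finite} set \<Rightarrow> 'a set"
  assumes "is_aut_P0 f"
    and "a \<noteq> 0"
    and "0 < n"
  shows "add_ord a = add_ord (pullback f a)
         \<and> pullback f (natmul n a) = natmul n (pullback f a)"
proof -
  note f = assms(1) and a = assms(2)
  have bij: "bij_betw f P0 P0" and hom: "\<And>A B. A \<in> P0 \<Longrightarrow> B \<in> P0 \<Longrightarrow> f (sumset A B) = sumset (f A) (f B)"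
    using f unfolding is_aut_P0_def by auto
  have inj: "inj_on f P0" using bij unfolding bij_betw_def by auto
  have pairP: "{0, x} \<in> P0" for x :: 'a unfolding P0_def by simp
  define b where "b = pullback f a"
  have b: "b \<noteq> 0" "f {0,a} = {0,b}" using pullback_eq[OF f a] b_def by auto
  have fpw: "f (pw k {0,a}) = pw k {0,b}" for k using aut_pw[OF f pairP] b by simp
  have stepeq: "pw k {0,a} = pw (Suc k) {0,a} \<longleftrightarrow> pw k {0,b} = pw (Suc k) {0,b}" for k
  proof
    assume "pw k {0,a} = pw (Suc k) {0,a}"
    then show "pw k {0,b} = pw (Suc k) {0,b}" using fpw by metis
  next
    assume "pw k {0,b} = pw (Suc k) {0,b}"
    then have "f (pw k {0,a}) = f (pw (Suc k) {0,a})" using fpw by metis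
    then show "pw k {0,a} = pw (Suc k) {0,a}" using inj pw_P0[OF pairP] unfolding inj_on_def by blast
  qed
  have ordiff: "add_ord a \<le> Suc k \<longleftrightarrow> add_ord b \<le> Suc k" for k
    using stepeq[of k] pw_step_iff[of k a] pw_step_iff[of k b] by simp
  have ordeq: "add_ord a = add_ord b"
    using ordiff[of "add_ord a - 1"] ordiff[of "add_ord b - 1"] ord_pos[of a] ord_pos[of b] by simp
  define N where "N = add_ord a"
  have claim: "k < N \<Longrightarrow> \<forall>j\<le>k. pullback f (natmul j a) = natmul j b" for k
  proof (induct k)
    case 0 then show ?case by (simp add: pullback_def)
  next
    case (Suc k)
    then have IH: "\<forall>j\<le>k. pullback f (natmul j a) = natmul j b" by simp
    define c where "c = natmul (Suc k) a"
    have c0: "c \<noteq> 0" unfolding c_def using ord_min[of "Suc k" a] Suc(2) N_def by simp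
    define d where "d = pullback f c"
    have d: "d \<noteq> 0" "f {0,c} = {0,d}" using pullback_eq[OF f c0] d_def by auto
    have e1: "f (sumset {0,c} (pw k {0,a})) = f (pw (Suc (2*k)) {0,a})"
      unfolding c_def sumset_interval ..
    have e2: "f (sumset {0,c} (pw k {0,a})) = sumset (f {0,c}) (f (pw k {0,a}))"
      by (rule hom[OF pairP pw_P0[OF pairP]])
    have eq: "sumset {0,d} (pw k {0,b}) = pw (Suc (2*k)) {0,b}"
      using e1 e2 unfolding d(2) fpw by simp
    have "natmul (Suc k) b \<in> pw (Suc (2*k)) {0,b}" unfolding pw_pair by (rule imageI) simp
    then have "natmul (Suc k) b \<in> sumset {0,d} ((\<lambda>j. natmul j b) ` {..k})"
      using eq unfolding pw_pair by simp
    then obtain u j where uj: "u \<in> {0,d}" "j \<le> k" "natmul (Suc k) b = u + natmul j b"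
      unfolding sumset_iff by blast
    have kb: "Suc k < add_ord b" using Suc(2) N_def ordeq by simp
    have "d = natmul (Suc k) b"
    proof (cases "u = 0")
      case True
      then have "Suc k = j" using natmul_inj[OF kb, of j] uj kb by simp
      then show ?thesis using uj by simp
    next
      case False
      then have u: "u = d" using uj by simp
      show ?thesis
      proof (cases "j = 0")
        case True then show ?thesis using uj u by simp
      next
        case False
        define i where "i = Suc k - j"
        have i: "1 \<le> i" "i \<le> k" using False uj unfolding i_def by auto
        have "natmul i b + natmul j b = d + natmul j b"
          using uj u natmul_add[of i j b] unfolding i_def by simp
        then have di: "d = natmul i b" by (metis add_right_imp_eq)
        have ia0: "natmul i a \<noteq> 0" using ord_min[of i a] i Suc(2) N_def by simp
        have "pullback f (natmul i a) = d" using IH i di by simp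
        then have "f {0, natmul i a} = f {0, c}" using pullback_eq[OF f ia0] d by simp
        then have "{0, natmul i a} = {0, c}" using inj pairP unfolding inj_on_def by blast
        then have "natmul i a = c" using ia0 c0 by (auto simp: doubleton_eq_iff)
        then have "i = Suc k" unfolding c_def using natmul_inj[of i a "Suc k"] i Suc(2) N_def by simp
        then show ?thesis using i by simp
      qed
    qed
    then have "pullback f (natmul (Suc k) a) = natmul (Suc k) b" using d_def c_def by simp
    then show ?case using IH le_Suc_eq by blast
  qed
  have "pullback f (natmul n a) = natmul n b"
  proof -
    define r where "r = n mod N"
    have r: "r < N" unfolding r_def N_def using ord_pos[of a] by simp
    have "natmul n a = natmul r a" unfolding r_def N_def by (rule natmul_mod)
    moreover have "natmul n b = natmul r b" unfolding r_def N_def ordeq by (rule natmul_mod)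
    moreover have "pullback f (natmul r a) = natmul r b" using claim[OF r] by simp
    ultimately show ?thesis by simp
  qed
  then show ?thesis using ordeq b_def by simp
qed

end
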